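(* Let $(f_n)_{n\ge 0}$ be a sequence of positive real numbers (not depending on $a$) and, for $a>0$, let \[ f(a,x)=\sum_{n=0}^{\infty} f_n\frac{(a)_n}{n!}x^n , \] regarded as a formal power series in $x$. Let $b>a>0$ and $\delta>0$, and write \[ \varphi_{a,b,\delta}(x)=f(a+\delta,x)f(b,x)-f(b+\delta,x)f(a,x)=\sum_{m=0}^{\infty}\varphi_m x^m . \] Then $\varphi_0=\varphi_1=0$, and: (i) if the sequence $\{f_n/f_{n-1}\}_{n\ge1}$ is decreasing, then $\varphi_m>0$ for all $m\ge 2$, so that $a\mapsto f(a,x)$ is strictly log-concave for $x>0$; (ii) if the sequence $\{f_n/f_{n-1}\}_{n\ge1}$ is increasing, then $\varphi_m<0$ for all $m\ge 2$, so that $a\mapsto f(a,x)$ is strictly log-convex for $x>0$.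
   Context: $(a)_n=a(a+1)\cdots(a+n-1)=\Gamma(a+n)/\Gamma(a)$ is the Pochhammer symbol, $(a)_0=1$. Power series are understood formally; the log-concavity/log-convexity statements refer to values $x>0$ at which the series converge. *)

theory Defs
  imports "HOL-Analysis.Analysis" "HOL-Computational_Algebra.Formal_Power_Series"
begin

definition hyp_fps :: "(nat \<Rightarrow> real) \<Rightarrow> real \<Rightarrow> real fps" where
  "hyp_fps f a = Abs_fps (\<lambda>n. f n * pochhammer a n / fact n)"

text \<open>The value of the series f(a,x) at a real point x (meaningful where it converges).\<close>
definition hyp_val :: "(nat \<Rightarrow> real) \<Rightarrow> real \<Rightarrow> real \<Rightarrow> real" where
  "hyp_val f a x = (\<Sum>n. f n * pochhammer a n / fact n * x ^ n)"

definition phi_fps :: "(nat \<Rightarrow> real) \<Rightarrow> real \<Rightarrow> real \<Rightarrow> real \<Rightarrow> real fps" where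
  "phi_fps f a b \<delta> = hyp_fps f (a + \<delta>) * hyp_fps f b - hyp_fps f (b + \<delta>) * hyp_fps f a"

definition strictly_concave_on :: "real set \<Rightarrow> (real \<Rightarrow> real) \<Rightarrow> bool" where
  "strictly_concave_on S g \<longleftrightarrow> convex S \<and>
     (\<forall>x\<in>S. \<forall>y\<in>S. \<forall>u. x \<noteq> y \<and> 0 < u \<and> u < 1 \<longrightarrow>
        u * g x + (1 - u) * g y < g (u * x + (1 - u) * y))"

definition strictly_convex_on :: "real set \<Rightarrow> (real \<Rightarrow> real) \<Rightarrow> bool" where
  "strictly_convex_on S g \<longleftrightarrow> convex S \<and>
     (\<forall>x\<in>S. \<forall>y\<in>S. \<forall>u. x \<noteq> y \<and> 0 < u \<and> u < 1 \<longrightarrow>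
        g (u * x + (1 - u) * y) < u * g x + (1 - u) * g y)"

end

theory Submission imports Defs begin

definition P :: "real \<Rightarrow> nat \<Rightarrow> real" where "P c n = pochhammer c n / fact n"

lemma vdm: "P (x+y) n = (\<Sum>k=0..n. P x k * P y (n-k))"
proof -
  have "(\<Sum>k=0..n. ((-x) gchoose k) * ((-y) gchoose (n - k))) = (-x + -y) gchoose n"
    by (rule gbinomial_Vandermonde)
  hence "(\<Sum>k=0..n. ((-1)^k * P x k) * ((-1)^(n-k) * P y (n-k))) = (-1)^n * P (x+y) n"
    by (simp add: gbinomial_pochhammer P_def ac_simps)
  moreover have "(\<Sum>k=0..n. ((-1)^k * P x k) * ((-1)^(n-k) * P y (n-k))) = (-1)^n * (\<Sum>k=0..n. P x k * P y (n-k))"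
    unfolding sum_distrib_left
  proof (rule sum.cong)
    fix k assume "k \<in> {0..n}"
    hence "(-1::real)^k * (-1)^(n-k) = (-1)^n" by (simp flip: power_add)
    thus "(-1)^k * P x k * ((-1)^(n-k) * P y (n-k)) = (-1)^n * (P x k * P y (n-k))"
      by (metis (no_types, lifting) mult.assoc mult.left_commute)
  qed simp
  ultimately show ?thesis by simp
qed

lemma hyp_nth: "fps_nth (hyp_fps f c) n = f n * P c n"
  by (simp add: hyp_fps_def P_def)

lemma finT: "finite {(i,j::nat). i+j \<le> m}"
  by (rule finite_subset[of _ "{..m}\<times>{..m}"]) auto

lemma prod_triple:
  "fps_nth (hyp_fps f (c1+d) * hyp_fps f c2) m =
   (\<Sum>(i,j)\<in>{(i,j). i+j \<le> m}. f (i+j) * f (m-(i+j)) * P c1 i * P d j * P c2 (m-(i+j)))"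
proof -
  let ?g = "\<lambda>i j. f (i+j) * f (m-(i+j)) * P c1 i * P d j * P c2 (m-(i+j))"
  have "(\<Sum>(i,j)\<in>{(i,j). i+j \<le> m}. ?g i j) = (\<Sum>k\<le>m. \<Sum>i\<le>k. ?g i (k-i))"
    by (rule sum.triangle_reindex_eq)
  also have "\<dots> = (\<Sum>k\<le>m. f k * P (c1+d) k * (f (m-k) * P c2 (m-k)))"
  proof (rule sum.cong)
    fix k assume "k \<in> {..m}"
    have "(\<Sum>i\<le>k. ?g i (k-i)) = (\<Sum>i\<le>k. f k * f (m-k) * P c2 (m-k) * (P c1 i * P d (k-i)))"
      by (rule sum.cong) (auto simp: algebra_simps)
    also have "\<dots> = f k * f (m-k) * P c2 (m-k) * P (c1+d) k"
      by (simp add: vdm sum_distrib_left atLeast0AtMost)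
    finally show "(\<Sum>i\<le>k. ?g i (k-i)) = f k * P (c1+d) k * (f (m-k) * P c2 (m-k))"
      by (simp add: algebra_simps)
  qed simp
  finally show ?thesis by (simp add: fps_mult_nth hyp_nth atLeast0AtMost)
qed

lemma phi_sum: "fps_nth (phi_fps f a b d) m =
  (\<Sum>(i,j)\<in>{(i,j). i+j \<le> m}. f (i+j) * f (m-(i+j)) * P d j * (P a i * P b (m-(i+j)) - P b i * P a (m-(i+j))))"
  unfolding phi_fps_def fps_sub_nth prod_triple
  by (subst sum_subtractf[symmetric], rule sum.cong) (auto simp: algebra_simps)

lemma phi_sym: "2 * fps_nth (phi_fps f a b d) m =
  (\<Sum>(i,j)\<in>{(i,j). i+j \<le> m}. P d j * (P a i * P b (m-(i+j)) - P b i * P a (m-(i+j))) * (f (i+j) * f (m-(i+j)) - f i * f (m-i)))"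
proof -
  let ?T = "{(i,j). i+j \<le> m}"
  define H where "H = (\<lambda>(i,j). f (i+j) * f (m-(i+j)) * P d j * (P a i * P b (m-(i+j)) - P b i * P a (m-(i+j))))"
  define sw where "sw = (\<lambda>(i::nat,j::nat). (m-(i+j), j))"
  have e1: "fps_nth (phi_fps f a b d) m = sum H ?T" unfolding phi_sum H_def ..
  have e2: "sum (H \<circ> sw) ?T = sum H ?T"
    by (rule sum.reindex_bij_witness[where i=sw and j=sw]) (auto simp: sw_def)
  have "2 * fps_nth (phi_fps f a b d) m = sum (\<lambda>p. H p + (H \<circ> sw) p) ?T"
    by (simp add: sum.distrib e1 e2[unfolded o_def])
  also have "\<dots> = (\<Sum>(i,j)\<in>?T. P d j * (P a i * P b (m-(i+j)) - P b i * P a (m-(i+j))) * (f (i+j) * f (m-(i+j)) - f i * f (m-i)))"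
  proof (rule sum.cong)
    fix p assume "p \<in> ?T"
    then obtain i j where p: "p = (i,j)" "i+j \<le> m" by auto
    have h1: "m - (m - (i+j) + j) = i" "m - (i+j) + j = m - i" "m - (j + (m - (i+j))) = i" "j + (m - (i+j)) = m - i" "m - (m - i) = i" using p by auto
    show "H p + (H \<circ> sw) p = (\<lambda>(i,j). P d j * (P a i * P b (m-(i+j)) - P b i * P a (m-(i+j))) * (f (i+j) * f (m-(i+j)) - f i * f (m-i))) p"
      unfolding p H_def sw_def by (simp add: h1 algebra_simps)
  qed simp
  finally show ?thesis .
qed

lemma poch_mono: "0 < (c::real) \<Longrightarrow> c \<le> d \<Longrightarrow> pochhammer c n \<le> pochhammer d n"
proof (induction n)
  case (Suc n)
  have "pochhammer c n * (c + of_nat n) \<le> pochhammer d n * (d + of_nat n)"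
    using Suc by (intro mult_mono) (auto intro: pochhammer_nonneg)
  thus ?case by (simp add: pochhammer_Suc)
qed simp

lemma poch_strict: "0 < (c::real) \<Longrightarrow> c < d \<Longrightarrow> 1 \<le> n \<Longrightarrow> pochhammer c n < pochhammer d n"
proof (induction n)
  case (Suc n)
  have "pochhammer c n * (c + of_nat n) < pochhammer d n * (d + of_nat n)"
  proof (rule mult_le_less_imp_less)
    show "pochhammer c n \<le> pochhammer d n" using Suc by (intro poch_mono) auto
  qed (use Suc in \<open>auto intro: pochhammer_pos\<close>)
  thus ?case by (simp add: pochhammer_Suc)
qed simp

lemma E_sign: assumes "0 < a" "a < b" "i \<le> l" shows "P b i * P a l \<le> P a i * P b l"
proof -
  have pa: "pochhammer a l = pochhammer a i * pochhammer (a + of_nat i) (l - i)"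
   and pb: "pochhammer b l = pochhammer b i * pochhammer (b + of_nat i) (l - i)"
    using assms(3) by (simp_all add: pochhammer_product)
  have "pochhammer b i * pochhammer a i * pochhammer (a + of_nat i) (l - i)
      \<le> pochhammer a i * pochhammer b i * pochhammer (b + of_nat i) (l - i)"
    using assms by (subst mult.commute[of "pochhammer b i"], intro mult_left_mono poch_mono) (auto intro!: mult_nonneg_nonneg pochhammer_nonneg)
  hence "pochhammer b i * pochhammer a l \<le> pochhammer a i * pochhammer b l"
    by (simp add: pa pb mult.assoc)
  thus ?thesis unfolding P_def by (simp add: divide_right_mono)
qed

lemma P0[simp]: "P c 0 = 1" by (simp add: P_def)
lemma P1[simp]: "P c (Suc 0) = c" by (simp add: P_def)

lemma phi_pos:
  fixes f :: "nat \<Rightarrow> real"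
  assumes "0 < a" "a < b" "0 < d" "2 \<le> m"
    and L2: "\<And>p q j. p \<le> q \<Longrightarrow> 0 \<le> s * (f (p+j) * f q - f p * f (q+j))"
    and S: "\<And>q. 1 \<le> q \<Longrightarrow> 0 < s * (f 1 * f q - f 0 * f (Suc q))"
  shows "0 < s * fps_nth (phi_fps f a b d) m"
proof -
  let ?T = "{(i,j). i+j \<le> m}"
  let ?t = "\<lambda>(i,j). s * (P d j * (P a i * P b (m-(i+j)) - P b i * P a (m-(i+j))) * (f (i+j) * f (m-(i+j)) - f i * f (m-i)))"
  have "2 * (s * fps_nth (phi_fps f a b d) m) = sum ?t ?T"
    by (simp add: phi_sym sum_distrib_left case_prod_unfold algebra_simps)
  also have "0 < sum ?t ?T"
  proof (rule sum_pos2[OF finT, of "(0,1)"])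
    show "(0,1) \<in> ?T" using assms by auto
    have "pochhammer a (m-1) < pochhammer b (m-1)" by (rule poch_strict) (use assms in auto)
    hence X: "0 < P b (m-1) - P a (m-1)" unfolding P_def by (simp add: divide_strict_right_mono)
    have Y0: "0 < s * (f 1 * f (m-1) - f 0 * f (Suc (m-1)))" by (rule S) (use assms in auto)
    have "Suc (m-1) = m" using assms by auto
    with Y0 have Y: "0 < s * (f 1 * f (m-1) - f 0 * f m)" by simp
    have "0 < d * ((P b (m-1) - P a (m-1)) * (s * (f 1 * f (m-1) - f 0 * f m)))"
      using assms(3) X Y by (simp only: zero_less_mult_iff) simp
    thus "0 < ?t (0,1)" by (simp add: mult_ac)
    show "0 \<le> ?t p" if "p \<in> ?T" for p
    proof -
      obtain i j where p: "p = (i,j)" "i+j \<le> m" using \<open>p \<in> ?T\<close> by auto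
      define l where "l = m - (i+j)"
      have ml: "m - i = l + j" using p l_def by auto
      have Pd: "0 \<le> P d j" unfolding P_def using assms by (simp add: pochhammer_nonneg)
      have "0 \<le> (P a i * P b l - P b i * P a l) * (s * (f (i+j) * f l - f i * f (l+j)))"
      proof (cases "i \<le> l")
        case True
        have e: "0 \<le> P a i * P b l - P b i * P a l" using E_sign[OF assms(1,2) True] by simp
        from e L2[OF True, of j] show ?thesis by (rule mult_nonneg_nonneg)
      next
        case False
        hence "l \<le> i" by auto
        have e: "P a i * P b l - P b i * P a l \<le> 0" using E_sign[OF assms(1,2) \<open>l \<le> i\<close>] by (simp add: algebra_simps)
        have e2: "s * (f (i+j) * f l - f i * f (l+j)) \<le> 0" using L2[OF \<open>l \<le> i\<close>, of j] by (simp add: algebra_simps)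
        from e e2 show ?thesis by (rule mult_nonpos_nonpos)
      qed
      hence "0 \<le> P d j * ((P a i * P b l - P b i * P a l) * (s * (f (i+j) * f l - f i * f (l+j))))"
        using Pd by simp
      thus ?thesis unfolding p by (simp add: l_def[symmetric] ml algebra_simps)
    qed
  qed
  finally show ?thesis by simp
qed

lemma L2gen:
  fixes f :: "nat \<Rightarrow> real"
  assumes fpos: "\<And>n. f n > 0" and A: "\<And>p q. p \<le> q \<Longrightarrow> f (Suc q) * f p \<le> f (Suc p) * f q"
    and pq: "p \<le> q"
  shows "f p * f (q+j) \<le> f (p+j) * f q"
proof (induction j)
  case (Suc j)
  have A1: "f (Suc (q+j)) * f (p+j) \<le> f (Suc (p+j)) * f (q+j)" using A pq by simp
  have "(f p * f (q+j)) * (f (Suc (q+j)) * f (p+j)) \<le> (f (p+j) * f q) * (f (Suc (p+j)) * f (q+j))"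
    by (rule mult_mono[OF Suc.IH A1]) (simp_all add: fpos less_imp_le)
  hence "(f p * f (Suc (q+j))) * (f (p+j) * f (q+j)) \<le> (f (Suc (p+j)) * f q) * (f (p+j) * f (q+j))"
    by (simp add: mult_ac)
  hence "f p * f (Suc (q+j)) \<le> f (Suc (p+j)) * f q"
    using fpos by (simp add: mult_le_cancel_right_pos)
  thus ?case by simp
qed simp

lemma L2gen':
  fixes f :: "nat \<Rightarrow> real"
  assumes fpos: "\<And>n. f n > 0" and A: "\<And>p q. p \<le> q \<Longrightarrow> f (Suc p) * f q \<le> f (Suc q) * f p"
    and pq: "p \<le> q"
  shows "f (p+j) * f q \<le> f p * f (q+j)"
proof (induction j)
  case (Suc j)
  have A1: "f (Suc (p+j)) * f (q+j) \<le> f (Suc (q+j)) * f (p+j)" using A pq by simp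
  have "(f (p+j) * f q) * (f (Suc (p+j)) * f (q+j)) \<le> (f p * f (q+j)) * (f (Suc (q+j)) * f (p+j))"
    by (rule mult_mono[OF Suc.IH A1]) (simp_all add: fpos less_imp_le)
  hence "(f (Suc (p+j)) * f q) * (f (p+j) * f (q+j)) \<le> (f p * f (Suc (q+j))) * (f (p+j) * f (q+j))"
    by (simp add: mult_ac)
  hence "f (Suc (p+j)) * f q \<le> f p * f (Suc (q+j))"
    using fpos by (simp add: mult_le_cancel_right_pos)
  thus ?case by simp
qed simp

lemma ratio_dec:
  fixes f :: "nat \<Rightarrow> real"
  assumes fpos: "\<And>n. f n > 0" and dec: "\<forall>n\<ge>1. f (Suc n) / f n < f n / f (n - 1)"
  shows "p < q \<Longrightarrow> f (Suc q) / f q < f (Suc p) / f p"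
proof (induction q)
  case (Suc q)
  have "f (Suc (Suc q)) / f (Suc q) < f (Suc q) / f q" using dec[rule_format, of "Suc q"] by simp
  thus ?case using Suc by (cases "p = q") auto
qed simp

lemma ratio_inc:
  fixes f :: "nat \<Rightarrow> real"
  assumes fpos: "\<And>n. f n > 0" and inc: "\<forall>n\<ge>1. f (Suc n) / f n > f n / f (n - 1)"
  shows "p < q \<Longrightarrow> f (Suc q) / f q > f (Suc p) / f p"
proof (induction q)
  case (Suc q)
  have "f (Suc (Suc q)) / f (Suc q) > f (Suc q) / f q" using inc[rule_format, of "Suc q"] by simp
  thus ?case using Suc by (cases "p = q") auto
qed simp

lemma dec_conds:
  fixes f :: "nat \<Rightarrow> real"
  assumes fpos: "\<And>n. f n > 0" and dec: "\<forall>n\<ge>1. f (Suc n) / f n < f n / f (n - 1)"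
  shows "\<And>p q j. p \<le> q \<Longrightarrow> 0 \<le> 1 * (f (p+j) * f q - f p * f (q+j))"
    and "\<And>q. 1 \<le> q \<Longrightarrow> 0 < 1 * (f 1 * f q - f 0 * f (Suc q))"
proof -
  have A: "f (Suc q) * f p \<le> f (Suc p) * f q" if "p \<le> q" for p q
  proof (cases "p = q")
    case False
    hence "f (Suc q) / f q < f (Suc p) / f p" using that ratio_dec[OF fpos dec] by simp
    thus ?thesis using fpos[of p] fpos[of q] by (simp add: field_simps)
  qed simp
  show "\<And>p q j. p \<le> q \<Longrightarrow> 0 \<le> 1 * (f (p+j) * f q - f p * f (q+j))"
    using L2gen[of f, OF fpos A] by simp
  fix q :: nat assume "1 \<le> q"
  hence "f (Suc q) / f q < f (Suc 0) / f 0" using ratio_dec[OF fpos dec, of 0 q] by simp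
  thus "0 < 1 * (f 1 * f q - f 0 * f (Suc q))" using fpos[of 0] fpos[of q] by (simp add: field_simps)
qed

lemma inc_conds:
  fixes f :: "nat \<Rightarrow> real"
  assumes fpos: "\<And>n. f n > 0" and inc: "\<forall>n\<ge>1. f (Suc n) / f n > f n / f (n - 1)"
  shows "\<And>p q j. p \<le> q \<Longrightarrow> 0 \<le> -1 * (f (p+j) * f q - f p * f (q+j))"
    and "\<And>q. 1 \<le> q \<Longrightarrow> 0 < -1 * (f 1 * f q - f 0 * f (Suc q))"
proof -
  have A: "f (Suc p) * f q \<le> f (Suc q) * f p" if "p \<le> q" for p q
  proof (cases "p = q")
    case False
    hence "f (Suc q) / f q > f (Suc p) / f p" using that ratio_inc[OF fpos inc] by simp
    thus ?thesis using fpos[of p] fpos[of q] by (simp add: field_simps)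
  qed simp
  show "\<And>p q j. p \<le> q \<Longrightarrow> 0 \<le> -1 * (f (p+j) * f q - f p * f (q+j))"
    using L2gen'[of f, OF fpos A] by simp
  fix q :: nat assume "1 \<le> q"
  hence "f (Suc q) / f q > f (Suc 0) / f 0" using ratio_inc[OF fpos inc, of 0 q] by simp
  thus "0 < -1 * (f 1 * f q - f 0 * f (Suc q))" using fpos[of 0] fpos[of q] by (simp add: field_simps)
qed

lemma chord_strict:
  fixes G :: "real \<Rightarrow> real"
  assumes cont: "\<And>u v. 0 < u \<Longrightarrow> continuous_on {u..v} G"
    and IP: "\<And>a b d. 0 < a \<Longrightarrow> a < b \<Longrightarrow> 0 < d \<Longrightarrow> G (b+d) - G b < G (a+d) - G a"
    and xy: "0 < x" "x < z" "z < y"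
  shows "G x + (z - x) * ((G y - G x) / (y - x)) < G z"
proof (rule ccontr)
  assume nc: "\<not> ?thesis"
  define k where "k = (G y - G x) / (y - x)"
  define H where "H t = G t - G x - (t - x) * k" for t
  have Hx: "H x = 0" and Hy: "H y = 0" using xy by (auto simp: H_def k_def)
  have Hz: "H z \<le> 0" using nc by (simp add: H_def k_def)
  have cH: "continuous_on {x..y} H" unfolding H_def using cont[OF xy(1)] by (intro continuous_intros) auto
  obtain s where s: "s \<in> {x..y}" "\<And>t. t \<in> {x..y} \<Longrightarrow> H s \<le> H t"
    using continuous_attains_inf[OF compact_Icc _ cH] xy by fastforce
  obtain w where w: "x < w" "w < y" "\<And>t. t \<in> {x..y} \<Longrightarrow> H w \<le> H t"
  proof (cases "x < s \<and> s < y")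
    case True thus ?thesis using that s by blast
  next
    case False
    hence "s = x \<or> s = y" using s(1) by auto
    hence "H s = 0" using Hx Hy by auto
    hence "\<And>t. t \<in> {x..y} \<Longrightarrow> H z \<le> H t" using s(2) Hz by force
    thus ?thesis using that xy by blast
  qed
  define h where "h = min (w - x) (y - w)"
  have h: "0 < h" "x \<le> w - h" "w + h \<le> y" using w by (auto simp: h_def)
  have "G (w + h) - G w < G w - G (w - h)"
    using IP[of "w-h" w h] h xy by simp
  moreover have "H (w+h) + H (w-h) - 2 * H w = G (w+h) + G (w-h) - 2 * G w"
    by (simp add: H_def algebra_simps)
  moreover have "H w \<le> H (w+h)" "H w \<le> H (w-h)" using w(3) h w by auto
  ultimately show False by linarith
qed

lemma strict_concave_IP:
  fixes G :: "real \<Rightarrow> real"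
  assumes cont: "\<And>u v. 0 < u \<Longrightarrow> continuous_on {u..v} G"
    and IP: "\<And>a b d. 0 < a \<Longrightarrow> a < b \<Longrightarrow> 0 < d \<Longrightarrow> G (b+d) - G b < G (a+d) - G a"
  shows "strictly_concave_on {0<..} G"
  unfolding strictly_concave_on_def
proof (intro conjI ballI allI impI)
  show "convex {0::real<..}" by simp
  fix x y u :: real assume x: "x \<in> {0<..}" and y: "y \<in> {0<..}" and u: "x \<noteq> y \<and> 0 < u \<and> u < 1"
  define z where "z = u * x + (1 - u) * y"
  show "u * G x + (1 - u) * G y < G (u * x + (1 - u) * y)"
  proof (cases "x < y")
    case True
    have e1: "z - x = (1-u)*(y-x)" "y - z = u*(y-x)" by (simp_all add: z_def algebra_simps)
    have p1: "0 < (1-u)*(y-x)" "0 < u*(y-x)" using u True by simp_all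
    have xz1: "x < z" using e1(1) p1(1) by linarith
    have xz2: "z < y" using e1(2) p1(2) by linarith
    note xz = xz1 xz2
    from chord_strict[OF cont IP _ xz] x
    have "G x + (z - x) * ((G y - G x) / (y - x)) < G z" by simp
    moreover have "(z - x) * ((G y - G x) / (y - x)) = (1 - u) * (G y - G x)"
      using True by (simp add: e1)
    ultimately show ?thesis by (simp add: z_def algebra_simps)
  next
    case False
    hence yx: "y < x" using u by auto
    have e1: "z - y = u*(x-y)" "x - z = (1-u)*(x-y)" by (simp_all add: z_def algebra_simps)
    have p1: "0 < u*(x-y)" "0 < (1-u)*(x-y)" using u yx by simp_all
    have yz1: "y < z" using e1(1) p1(1) by linarith
    have yz2: "z < x" using e1(2) p1(2) by linarith
    note yz = yz1 yz2
    from chord_strict[OF cont IP _ yz] y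
    have "G y + (z - y) * ((G x - G y) / (x - y)) < G z" by simp
    moreover have "(z - y) * ((G x - G y) / (x - y)) = u * (G x - G y)"
      using yx by (simp add: e1)
    ultimately show ?thesis by (simp add: z_def algebra_simps)
  qed
qed

lemma phi01: "fps_nth (phi_fps f a b d) 0 = 0" "fps_nth (phi_fps f a b d) 1 = 0"
  by (simp_all add: phi_fps_def fps_mult_nth hyp_nth algebra_simps)

lemma T_nonneg: "(\<And>n. f n > 0) \<Longrightarrow> 0 < c \<Longrightarrow> 0 < (x::real) \<Longrightarrow> 0 \<le> f n * pochhammer c n / fact n * x ^ n"
  by (intro mult_nonneg_nonneg divide_nonneg_pos) (auto intro: less_imp_le pochhammer_nonneg)

lemma F_pos:
  assumes "\<And>n. f n > 0" "0 < c" "0 < x" "summable (\<lambda>n. f n * pochhammer c n / fact n * x ^ n)"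
  shows "0 < hyp_val f c x"
  unfolding hyp_val_def
  by (rule suminf_pos2[of _ 0]) (use assms T_nonneg in auto)

lemma prod_series:
  assumes fpos: "\<And>n. f n > 0" and c: "0 < c1" "0 < c2" and x: "0 < x"
    and s1: "summable (\<lambda>n. f n * pochhammer c1 n / fact n * x ^ n)"
    and s2: "summable (\<lambda>n. f n * pochhammer c2 n / fact n * x ^ n)"
  shows "(\<lambda>k. fps_nth (hyp_fps f c1 * hyp_fps f c2) k * x^k) sums (hyp_val f c1 x * hyp_val f c2 x)"
proof -
  let ?a = "\<lambda>n. f n * pochhammer c1 n / fact n * x ^ n"
  let ?b = "\<lambda>n. f n * pochhammer c2 n / fact n * x ^ n"
  have "(\<lambda>k. norm (?a k)) = ?a" "(\<lambda>k. norm (?b k)) = ?b"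
    by (rule ext, simp only: real_norm_def abs_of_nonneg[OF T_nonneg[where f=f, OF fpos c(1) x]]
        abs_of_nonneg[OF T_nonneg[where f=f, OF fpos c(2) x]])+
  hence n1: "summable (\<lambda>k. norm (?a k))" and n2: "summable (\<lambda>k. norm (?b k))" using s1 s2 by simp_all
  have "(\<lambda>k. \<Sum>i\<le>k. ?a i * ?b (k - i)) sums (suminf ?a * suminf ?b)"
    by (rule Cauchy_product_sums[OF n1 n2])
  moreover have "(\<Sum>i\<le>k. ?a i * ?b (k - i)) = fps_nth (hyp_fps f c1 * hyp_fps f c2) k * x^k" for k
  proof -
    have "(\<Sum>i\<le>k. ?a i * ?b (k - i)) = (\<Sum>i\<le>k. fps_nth (hyp_fps f c1) i * fps_nth (hyp_fps f c2) (k-i) * x^k)"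
    proof (rule sum.cong)
      fix i assume "i \<in> {..k}"
      hence "x ^ i * x ^ (k - i) = x ^ k" by (simp flip: power_add)
      thus "?a i * ?b (k - i) = fps_nth (hyp_fps f c1) i * fps_nth (hyp_fps f c2) (k-i) * x^k"
        by (simp add: hyp_nth P_def)
    qed simp
    thus ?thesis by (simp add: fps_mult_nth sum_distrib_right atLeast0AtMost)
  qed
  ultimately show ?thesis by (simp add: hyp_val_def)
qed

lemma IP_main:
  fixes f :: "nat \<Rightarrow> real"
  assumes fpos: "\<And>n. f n > 0" and ab: "0 < a" "a < b" and d: "0 < d" and x: "0 < x"
    and sm: "\<forall>c>0. summable (\<lambda>n. f n * pochhammer c n / fact n * x ^ n)"
    and L2: "\<And>p q j. p \<le> q \<Longrightarrow> 0 \<le> s * (f (p+j) * f q - f p * f (q+j))"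
    and S: "\<And>q. 1 \<le> q \<Longrightarrow> 0 < s * (f 1 * f q - f 0 * f (Suc q))"
  shows "0 < s * (hyp_val f (a+d) x * hyp_val f b x - hyp_val f (b+d) x * hyp_val f a x)"
proof -
  have "(\<lambda>k. fps_nth (phi_fps f a b d) k * x^k) sums (hyp_val f (a+d) x * hyp_val f b x - hyp_val f (b+d) x * hyp_val f a x)"
    unfolding phi_fps_def fps_sub_nth left_diff_distrib
    by (intro sums_diff prod_series) (use fpos ab d x sm in auto)
  hence sm2: "(\<lambda>k. s * (fps_nth (phi_fps f a b d) k * x^k)) sums (s * (hyp_val f (a+d) x * hyp_val f b x - hyp_val f (b+d) x * hyp_val f a x))"
    by (rule sums_mult)
  have pos: "0 < s * fps_nth (phi_fps f a b d) k * x^k" if "2 \<le> k" for k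
    using phi_pos[OF ab d that L2 S] x by simp
  have "0 < (\<Sum>k. s * (fps_nth (phi_fps f a b d) k * x^k))"
  proof (rule suminf_pos2[of _ 2])
    show "summable (\<lambda>k. s * (fps_nth (phi_fps f a b d) k * x^k))" using sm2 by (rule sums_summable)
    show "0 \<le> s * (fps_nth (phi_fps f a b d) k * x^k)" for k
    proof (cases "2 \<le> k")
      case True thus ?thesis using pos[OF True] by (simp add: mult.assoc)
    next
      case False hence "k = 0 \<or> k = 1" by auto
      thus ?thesis using phi01 by auto
    qed
    show "0 < s * (fps_nth (phi_fps f a b d) 2 * x^2)" using pos[of 2] by (simp add: mult.assoc)
  qed
  thus ?thesis using sm2 by (simp add: sums_iff)
qed

lemma F_cont:
  fixes f :: "nat \<Rightarrow> real"
  assumes fpos: "\<And>n. f n > 0" and x: "0 < x" and u: "0 < u"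
    and sm: "\<forall>c>0. summable (\<lambda>n. f n * pochhammer c n / fact n * x ^ n)"
  shows "continuous_on {u..v} (\<lambda>c. hyp_val f c x)"
proof (cases "u \<le> v")
  case False thus ?thesis by simp
next
  case True
  have ul: "uniform_limit {u..v} (\<lambda>n c. \<Sum>i<n. f i * pochhammer c i / fact i * x ^ i)
       (\<lambda>c. suminf (\<lambda>i. f i * pochhammer c i / fact i * x ^ i)) sequentially"
  proof (rule Weierstrass_m_test)
    show "summable (\<lambda>n. f n * pochhammer v n / fact n * x ^ n)" using sm u True by auto
    fix n c assume c: "c \<in> {u..v}"
    have "0 \<le> f n * pochhammer c n / fact n * x ^ n" using T_nonneg[where f=f, OF fpos _ x] c u by auto
    moreover have "f n * pochhammer c n / fact n * x ^ n \<le> f n * pochhammer v n / fact n * x ^ n"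
      using c u fpos[of n] x
      by (intro mult_right_mono divide_right_mono mult_left_mono poch_mono) auto
    ultimately show "norm (f n * pochhammer c n / fact n * x ^ n) \<le> f n * pochhammer v n / fact n * x ^ n"
      by simp
  qed
  have "continuous_on {u..v} (\<lambda>c. suminf (\<lambda>i. f i * pochhammer c i / fact i * x ^ i))"
    by (rule uniform_limit_theorem[OF _ ul]) (auto intro!: always_eventually continuous_intros)
  thus ?thesis by (simp add: hyp_val_def)
qed

lemma ln_IP:
  fixes f :: "nat \<Rightarrow> real"
  assumes fpos: "\<And>n. f n > 0" and x: "0 < x"
    and sm: "\<forall>c>0. summable (\<lambda>n. f n * pochhammer c n / fact n * x ^ n)"
    and L2: "\<And>p q j. p \<le> q \<Longrightarrow> 0 \<le> s * (f (p+j) * f q - f p * f (q+j))"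
    and S: "\<And>q. 1 \<le> q \<Longrightarrow> 0 < s * (f 1 * f q - f 0 * f (Suc q))"
    and s: "s = 1 \<or> s = -1"
  shows "strictly_concave_on {0<..} (\<lambda>c. s * ln (hyp_val f c x))"
proof (rule strict_concave_IP)
  have Fp: "0 < hyp_val f c x" if "0 < c" for c using F_pos[OF fpos that x] sm that by auto
  show "continuous_on {u..v} (\<lambda>c. s * ln (hyp_val f c x))" if "0 < u" for u v
  proof -
    have nz: "hyp_val f c x \<noteq> 0" if "c \<in> {u..v}" for c
    proof -
      have "0 < c" using that \<open>0 < u\<close> by simp
      thus ?thesis using Fp by force
    qed
    show ?thesis using F_cont[OF fpos x that sm] nz by (intro continuous_intros) auto
  qed
  fix a b d :: real assume ab: "0 < a" "a < b" "0 < d"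
  have I: "0 < s * (hyp_val f (a+d) x * hyp_val f b x - hyp_val f (b+d) x * hyp_val f a x)"
    by (rule IP_main[OF fpos ab x sm L2 S])
  have pa: "0 < hyp_val f a x" "0 < hyp_val f b x" "0 < hyp_val f (a+d) x" "0 < hyp_val f (b+d) x"
    using ab by (auto intro!: Fp)
  from s show "s * ln (hyp_val f (b + d) x) - s * ln (hyp_val f b x) < s * ln (hyp_val f (a + d) x) - s * ln (hyp_val f a x)"
  proof
    assume s1: "s = 1"
    hence "hyp_val f (b+d) x * hyp_val f a x < hyp_val f (a+d) x * hyp_val f b x" using I by simp
    hence "ln (hyp_val f (b+d) x * hyp_val f a x) < ln (hyp_val f (a+d) x * hyp_val f b x)"
      using pa by simp
    thus ?thesis using pa s1 by (simp add: ln_mult)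
  next
    assume s1: "s = -1"
    hence "hyp_val f (a+d) x * hyp_val f b x < hyp_val f (b+d) x * hyp_val f a x" using I by simp
    hence "ln (hyp_val f (a+d) x * hyp_val f b x) < ln (hyp_val f (b+d) x * hyp_val f a x)"
      using pa by simp
    thus ?thesis using pa s1 by (simp add: ln_mult)
  qed
qed

theorem theorem1:
  fixes f :: "nat \<Rightarrow> real" and a b \<delta> :: real
  assumes fpos: "\<And>n. f n > 0"
    and ab: "0 < a" "a < b" and dpos: "0 < \<delta>"
  shows "fps_nth (phi_fps f a b \<delta>) 0 = 0 \<and> fps_nth (phi_fps f a b \<delta>) 1 = 0
    \<and> ((\<forall>n\<ge>1. f (Suc n) / f n < f n / f (n - 1)) \<longrightarrow>
          (\<forall>m\<ge>2. fps_nth (phi_fps f a b \<delta>) m > 0)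
          \<and> (\<forall>x>0. (\<forall>c>0. summable (\<lambda>n. f n * pochhammer c n / fact n * x ^ n)) \<longrightarrow>
                 strictly_concave_on {0<..} (\<lambda>c. ln (hyp_val f c x))))
    \<and> ((\<forall>n\<ge>1. f (Suc n) / f n > f n / f (n - 1)) \<longrightarrow>
          (\<forall>m\<ge>2. fps_nth (phi_fps f a b \<delta>) m < 0)
          \<and> (\<forall>x>0. (\<forall>c>0. summable (\<lambda>n. f n * pochhammer c n / fact n * x ^ n)) \<longrightarrow>
                 strictly_convex_on {0<..} (\<lambda>c. ln (hyp_val f c x))))"
proof (intro conjI impI allI)
  show "fps_nth (phi_fps f a b \<delta>) 0 = 0" "fps_nth (phi_fps f a b \<delta>) 1 = 0" by (rule phi01)+
next
  fix m :: nat assume dec: "\<forall>n\<ge>1. f (Suc n) / f n < f n / f (n - 1)" and m: "2 \<le> m"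
  show "0 < fps_nth (phi_fps f a b \<delta>) m"
    using phi_pos[OF ab dpos m dec_conds[OF fpos dec]] by simp
next
  fix x :: real assume dec: "\<forall>n\<ge>1. f (Suc n) / f n < f n / f (n - 1)" and x: "0 < x"
    and sm: "\<forall>c>0. summable (\<lambda>n. f n * pochhammer c n / fact n * x ^ n)"
  show "strictly_concave_on {0<..} (\<lambda>c. ln (hyp_val f c x))"
    using ln_IP[OF fpos x sm dec_conds[OF fpos dec]] by simp
next
  fix m :: nat assume inc: "\<forall>n\<ge>1. f n / f (n - 1) < f (Suc n) / f n" and m: "2 \<le> m"
  show "fps_nth (phi_fps f a b \<delta>) m < 0"
    using phi_pos[OF ab dpos m inc_conds[OF fpos inc]] by simp
next
  fix x :: real assume inc: "\<forall>n\<ge>1. f n / f (n - 1) < f (Suc n) / f n" and x: "0 < x"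
    and sm: "\<forall>c>0. summable (\<lambda>n. f n * pochhammer c n / fact n * x ^ n)"
  have "strictly_concave_on {0<..} (\<lambda>c. -1 * ln (hyp_val f c x))"
    using ln_IP[OF fpos x sm inc_conds[OF fpos inc]] by simp
  thus "strictly_convex_on {0<..} (\<lambda>c. ln (hyp_val f c x))"
    unfolding strictly_concave_on_def strictly_convex_on_def by (auto simp: algebra_simps)
qed

end
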